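(* Let $H$ be a real separable Hilbert space, $E:H\to\mathbb R$ Fréchet differentiable, $\phi$ as in the context, $K:H\to\mathcal L(H)$ with $K(y)$ symmetric positive semidefinite, and $L:H\to\mathcal L(H)$ with $L(y)^*=-L(y)$, such that $L^*(y)\partial\phi(y)=K^*(y)DE(y)=0$ for all $y\in D(\partial\phi)$. Let $u\in L^2(0,T;H)$ and $y\in H^1(0,T;H)$ with $y(0)=y_0$, $y(t)\in D(\partial\phi)$ a.e., $\partial\phi(y)\in L^2(0,T;H)$ and $L(y)DE(y)\in L^2(0,T;H)$. Then $G^{\rm gen}_{\rm DG}(u,y)=0$ if and only if $y'=L(y)DE(y)-K(y)(\partial\phi(y)-u)$ a.e. in $(0,T)$.
   Context: $\phi=\phi_1+\phi_2$ with $\phi_1$ proper convex lsc, $\phi_2\in C^{1,1}$, $\partial\phi=\partial\phi_1+D\phi_2$ single-valued on its domain and satisfying the chain rule: if $y\in H^1(0,T;H)$, $\xi\in L^2(0,T;H)$, $\xi(t)\in\partial\phi(y(t))$ a.e., then $\phi\circ y$ is absolutely continuous with $(\phi\circ y)'=(\xi,y')$ a.e. Set $\psi^*(y,\xi)=\frac12(K(y)\xi,\xi)$ and let $\psi(y,\cdot)$ be its Legendre–Fenchel conjugate in the second variable (so $K(y)=\partial\psi^*(y,\cdot)$). Define $G^{\rm gen}_{\rm DG}(u,y)=\int_0^T\big(\psi(y,y'-L(y)DE(y))+\psi^*(y,u-\partial\phi(y))\big)dt-\int_0^T(u,y'-L(y)DE(y))\,dt+\phi(y(T))-\phi(y_0)$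 if $y\in D(\partial\phi)$ a.e. and $y(0)=y_0$, and $+\infty$ otherwise. *)

theory Defs
  imports "HOL-Analysis.Analysis"
begin

definition proper_fun :: "('a \<Rightarrow> ereal) \<Rightarrow> bool" where
  "proper_fun f \<longleftrightarrow> (\<forall>x. f x \<noteq> -\<infinity>) \<and> (\<exists>x. f x < \<infinity>)"

definition convex_ereal_fun :: "('a::real_vector \<Rightarrow> ereal) \<Rightarrow> bool" where
  "convex_ereal_fun f \<longleftrightarrow>
     (\<forall>x y. \<forall>t::real. 0 \<le> t \<and> t \<le> 1 \<longrightarrow>
        f ((1 - t) *\<^sub>R x + t *\<^sub>R y) \<le> ereal (1 - t) * f x + ereal t * f y)"

definition lsc_fun :: "('a::topological_space \<Rightarrow> ereal) \<Rightarrow> bool" where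
  "lsc_fun f \<longleftrightarrow> (\<forall>c. closed {x. f x \<le> c})"

definition subdiff :: "('a::real_inner \<Rightarrow> ereal) \<Rightarrow> 'a \<Rightarrow> 'a set" where
  "subdiff f x = {\<xi>. \<bar>f x\<bar> \<noteq> \<infinity> \<and> (\<forall>z. f x + ereal (\<xi> \<bullet> (z - x)) \<le> f z)}"

definition phi_fun :: "('a \<Rightarrow> ereal) \<Rightarrow> ('a \<Rightarrow> real) \<Rightarrow> 'a \<Rightarrow> ereal" where
  "phi_fun \<phi>1 \<phi>2 x = \<phi>1 x + ereal (\<phi>2 x)"

definition subdiff_phi :: "('a::real_inner \<Rightarrow> ereal) \<Rightarrow> ('a \<Rightarrow> 'a) \<Rightarrow> 'a \<Rightarrow> 'a set" where
  "subdiff_phi \<phi>1 D\<phi>2 x = (\<lambda>\<xi>. \<xi> + D\<phi>2 x) ` subdiff \<phi>1 x"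

definition dom_subdiff_phi :: "('a::real_inner \<Rightarrow> ereal) \<Rightarrow> ('a \<Rightarrow> 'a) \<Rightarrow> 'a set" where
  "dom_subdiff_phi \<phi>1 D\<phi>2 = {x. subdiff_phi \<phi>1 D\<phi>2 x \<noteq> {}}"

text \<open>The single value of the subdifferential of phi (meaningful on its domain).\<close>
definition dphi :: "('a::real_inner \<Rightarrow> ereal) \<Rightarrow> ('a \<Rightarrow> 'a) \<Rightarrow> 'a \<Rightarrow> 'a" where
  "dphi \<phi>1 D\<phi>2 x = (THE \<xi>. \<xi> \<in> subdiff_phi \<phi>1 D\<phi>2 x)"

definition abs_cont_on :: "real \<Rightarrow> real \<Rightarrow> (real \<Rightarrow> real) \<Rightarrow> bool" where
  "abs_cont_on a b g \<longleftrightarrow>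
     (\<forall>\<epsilon>>0. \<exists>\<delta>>0. \<forall>S :: (real \<times> real) set.
        finite S \<and> (\<forall>(s,t)\<in>S. a \<le> s \<and> s \<le> t \<and> t \<le> b) \<and>
        pairwise (\<lambda>(s,t) (s',t'). {s<..<t} \<inter> {s'<..<t'} = {}) S \<and>
        (\<Sum>(s,t)\<in>S. t - s) < \<delta>
        \<longrightarrow> (\<Sum>(s,t)\<in>S. \<bar>g t - g s\<bar>) < \<epsilon>)"

definition L2 :: "real \<Rightarrow> (real \<Rightarrow> 'a::{real_normed_vector, second_countable_topology}) \<Rightarrow> bool" where
  "L2 T f \<longleftrightarrow> f \<in> borel_measurable (lebesgue_on {0..T}) \<and>
              integrable (lebesgue_on {0..T}) (\<lambda>t. (norm (f t))\<^sup>2)"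

text \<open>y in H^1(0,T;H) with weak derivative y' (y is its continuous representative).\<close>
definition H1 :: "real \<Rightarrow> (real \<Rightarrow> 'a::{banach, second_countable_topology}) \<Rightarrow> (real \<Rightarrow> 'a) \<Rightarrow> bool" where
  "H1 T y y' \<longleftrightarrow> L2 T y \<and> L2 T y' \<and>
     (\<forall>t\<in>{0..T}. y t = y 0 + integral\<^sup>L (lebesgue_on {0..t}) y')"

definition chain_rule :: "real \<Rightarrow> ('a::{real_inner, banach, second_countable_topology} \<Rightarrow> ereal)
    \<Rightarrow> ('a \<Rightarrow> real) \<Rightarrow> ('a \<Rightarrow> 'a) \<Rightarrow> bool" where
  "chain_rule T \<phi>1 \<phi>2 D\<phi>2 \<longleftrightarrow>
     (\<forall>y y' \<xi>. H1 T y y' \<and> L2 T \<xi> \<and>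
        (AE t in lebesgue_on {0..T}. \<xi> t \<in> subdiff_phi \<phi>1 D\<phi>2 (y t))
      \<longrightarrow> (\<exists>g. abs_cont_on 0 T g \<and> (\<forall>t\<in>{0..T}. phi_fun \<phi>1 \<phi>2 (y t) = ereal (g t)) \<and>
             (AE t in lebesgue_on {0..T}. (g has_real_derivative (\<xi> t \<bullet> y' t)) (at t))))"

definition psi_star :: "('a \<Rightarrow> 'a \<Rightarrow> 'a::real_inner) \<Rightarrow> 'a \<Rightarrow> 'a \<Rightarrow> ereal" where
  "psi_star K y \<xi> = ereal ((1/2) * (K y \<xi> \<bullet> \<xi>))"

definition psi :: "('a \<Rightarrow> 'a \<Rightarrow> 'a::real_inner) \<Rightarrow> 'a \<Rightarrow> 'a \<Rightarrow> ereal" where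
  "psi K y v = (SUP \<xi>. ereal (v \<bullet> \<xi>) - psi_star K y \<xi>)"

definition G_DG :: "real \<Rightarrow> ('a \<Rightarrow> 'a \<Rightarrow> 'a::{real_inner, banach, second_countable_topology})
    \<Rightarrow> ('a \<Rightarrow> 'a \<Rightarrow> 'a) \<Rightarrow> ('a \<Rightarrow> 'a) \<Rightarrow> ('a \<Rightarrow> ereal) \<Rightarrow> ('a \<Rightarrow> real) \<Rightarrow> ('a \<Rightarrow> 'a)
    \<Rightarrow> 'a \<Rightarrow> (real \<Rightarrow> 'a) \<Rightarrow> (real \<Rightarrow> 'a) \<Rightarrow> (real \<Rightarrow> 'a) \<Rightarrow> ereal" where
  "G_DG T K L DE \<phi>1 \<phi>2 D\<phi>2 y0 u y y' =
     (if (AE t in lebesgue_on {0..T}. y t \<in> dom_subdiff_phi \<phi>1 D\<phi>2) \<and> y 0 = y0 then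
        enn2ereal (\<integral>\<^sup>+ t. e2ennreal
            (psi K (y t) (y' t - L (y t) (DE (y t)))
             + psi_star K (y t) (u t - dphi \<phi>1 D\<phi>2 (y t))) \<partial>lebesgue_on {0..T})
        - ereal (\<integral> t. u t \<bullet> (y' t - L (y t) (DE (y t))) \<partial>lebesgue_on {0..T})
        + phi_fun \<phi>1 \<phi>2 (y T) - phi_fun \<phi>1 \<phi>2 y0
      else \<infinity>)"

end

theory Submission
  imports Defs
begin

lemma riesz_repr:
  fixes f :: "'a::{real_inner,complete_space} \<Rightarrow> real"
  assumes bl: "bounded_linear f"
  shows "\<exists>z. \<forall>x. f x = z \<bullet> x"
proof (cases "\<forall>x. f x = 0")
  case True then show ?thesis by (intro exI[of _ 0]) simp
next
  case False
  interpret f: bounded_linear f by fact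
  obtain a where a: "f a \<noteq> 0" using False by blast
  define C where "C = {x. f x = 1}"
  have a1: "a /\<^sub>R f a \<in> C" using a by (simp add: C_def f.scale)
  define d2 where "d2 = Inf ((\<lambda>x. (norm x)^2) ` C)"
  have bdd: "bdd_below ((\<lambda>x. (norm x)^2) ` C)" by (intro bdd_belowI[of _ 0]) auto
  have d2le: "\<And>c. c \<in> C \<Longrightarrow> d2 \<le> (norm c)^2" unfolding d2_def by (rule cInf_lower) (use bdd in auto)
  have "\<forall>n::nat. \<exists>x\<in>C. (norm x)^2 < d2 + 1/(real n + 1)"
  proof
    fix n :: nat
    have lt: "d2 < d2 + 1/(real n + 1)" by simp
    have ne: "(\<lambda>x. (norm x)^2) ` C \<noteq> {}" using a1 by blast
    have "\<exists>v\<in>(\<lambda>x. (norm x)^2) ` C. v < d2 + 1/(real n + 1)"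
      using cInf_lessD[OF ne lt[unfolded d2_def]] unfolding d2_def .
    then obtain v where "v \<in> (\<lambda>x. (norm x)^2) ` C" "v < d2 + 1/(real n + 1)" by (elim bexE)
    then show "\<exists>x\<in>C. (norm x)^2 < d2 + 1/(real n + 1)" by auto
  qed
  then obtain xs where xsC: "\<And>n. xs n \<in> C" and xsn: "\<And>n. (norm (xs n))^2 < d2 + 1/(real n + 1)"
    by metis
  have mid: "d2 \<le> (norm ((xs m + xs n) /\<^sub>R 2))^2" for m n
  proof -
    have "(xs m + xs n) /\<^sub>R 2 \<in> C" using xsC[of m] xsC[of n]
      by (simp add: C_def f.scale f.add)
    then show ?thesis by (rule d2le)
  qed
  have par: "(norm (xs m - xs n))^2 \<le> 2/(real m + 1) + 2/(real n + 1)" for m n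
  proof -
    have pl: "(norm (xs m - xs n))^2 + (norm (xs m + xs n))^2 = 2*(norm (xs m))^2 + 2*(norm (xs n))^2"
      by (simp add: power2_norm_eq_inner inner_diff inner_add inner_commute)
    have "(norm ((xs m + xs n) /\<^sub>R 2))^2 = (norm (xs m + xs n))^2 / 4"
      by (simp add: power_divide)
    then have "4 * d2 \<le> (norm (xs m + xs n))^2" using mid[of m n] by simp
    then show ?thesis using pl xsn[of m] xsn[of n] by linarith
  qed
  have cauchy: "Cauchy xs"
  proof (rule metric_CauchyI)
    fix e :: real assume e: "e > 0"
    obtain M :: nat where M0: "4 / (e^2) < real M"
      using reals_Archimedean2 by blast
    then have M: "4 / (e^2) < real M + 1" by linarith
    show "\<exists>M. \<forall>m\<ge>M. \<forall>n\<ge>M. dist (xs m) (xs n) < e"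
    proof (intro exI allI impI)
      fix m n assume mn: "M \<le> m" "M \<le> n"
      have e2: "e^2 > 0" using e by simp
      have "4 < e^2 * (real M + 1)" using M e2 by (simp add: field_simps)
      then have h1: "4 / (real M + 1) < e^2" by (simp add: field_simps)
      have "2/(real m + 1) \<le> 2/(real M + 1)" "2/(real n + 1) \<le> 2/(real M + 1)"
        using mn by (auto intro!: divide_left_mono)
      then have "(norm (xs m - xs n))^2 < e^2" using par[of m n] h1 by linarith
      then show "dist (xs m) (xs n) < e" using e
        by (simp add: dist_norm power_less_imp_less_base)
    qed
  qed
  then obtain z where z: "xs \<longlonglongrightarrow> z" using Cauchy_convergent_iff convergent_def by blast
  have fz: "f z = 1"
  proof -
    have "(\<lambda>n. f (xs n)) \<longlonglongrightarrow> f z" using f.tendsto[OF z] .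
    moreover have "(\<lambda>n. f (xs n)) = (\<lambda>n. 1)" using xsC by (simp add: C_def)
    ultimately show ?thesis using LIMSEQ_const_iff by metis
  qed
  have nz: "(norm z)^2 \<le> d2"
  proof (rule LIMSEQ_le)
    show "(\<lambda>n. (norm (xs n))^2) \<longlonglongrightarrow> (norm z)^2" by (intro tendsto_intros z)
    show "(\<lambda>n. d2 + 1/(real n + 1)) \<longlonglongrightarrow> d2"
      using LIMSEQ_inverse_real_of_nat_add[of d2]
      by (simp add: inverse_eq_divide add.commute)
    show "\<exists>N. \<forall>n\<ge>N. (norm (xs n))^2 \<le> d2 + 1/(real n + 1)" using xsn less_imp_le by blast
  qed
  have orth: "z \<bullet> k = 0" if k: "f k = 0" for k
  proof -
    define A where "A = z \<bullet> k"
    define B where "B = (norm k)^2"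
    define t where "t = - A / (B + 1)"
    have B0: "B \<ge> 0" unfolding B_def by simp
    have "z + t *\<^sub>R k \<in> C" using fz k by (simp add: C_def f.add f.scale)
    then have "(norm z)^2 \<le> (norm (z + t *\<^sub>R k))^2" using d2le[of "z + t *\<^sub>R k"] nz by linarith
    also have "\<dots> = (norm z)^2 + 2*t*A + t^2 * B"
      unfolding A_def B_def power2_norm_eq_inner
      by (simp add: inner_add_left inner_add_right inner_commute algebra_simps power2_eq_square)
    finally have "0 \<le> 2*t*A + t^2*B" by simp
    then have "0 \<le> (2*t*A + t^2*B) * (B+1)^2" using B0 by simp
    also have "(2*t*A + t^2*B) * (B+1)^2 = - (A^2 * (B + 2))"
    proof -
      have tB: "t*(B+1) = -A" using B0 unfolding t_def by simp
      have "(2*t*A + t^2*B) * (B+1)^2 = 2*A*(t*(B+1))*(B+1) + (t*(B+1))^2*B"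
        by (simp add: power2_eq_square algebra_simps)
      also have "\<dots> = - (A^2 * (B + 2))" unfolding tB by (simp add: power2_eq_square algebra_simps)
      finally show ?thesis .
    qed
    finally have "A^2 * (B+2) \<le> 0" by simp
    then have "A^2 \<le> 0" using B0 by (simp add: mult_le_0_iff)
    then show ?thesis unfolding A_def by simp
  qed
  have zz: "z \<bullet> z \<noteq> 0" using fz by auto
  show ?thesis
  proof (intro exI allI)
    fix x
    have "f (x - f x *\<^sub>R z) = 0" using fz by (simp add: f.diff f.scale)
    then have "z \<bullet> (x - f x *\<^sub>R z) = 0" by (rule orth)
    then have "z \<bullet> x = f x * (z \<bullet> z)" by (simp add: inner_diff_right)
    then show "f x = (z /\<^sub>R (z \<bullet> z)) \<bullet> x" using zz by (simp add: field_simps)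
  qed
qed

lemma adjoint_prop:
  fixes F :: "'a::{real_inner,complete_space} \<Rightarrow> 'a"
  assumes "bounded_linear F"
  shows "F x \<bullet> y = x \<bullet> adjoint F y"
proof -
  have "\<forall>y. \<exists>z. \<forall>x. F x \<bullet> y = z \<bullet> x"
  proof
    fix y
    have "bounded_linear (\<lambda>x. F x \<bullet> y)"
      using bounded_linear_compose[OF bounded_linear_inner_left assms] .
    then show "\<exists>z. \<forall>x. F x \<bullet> y = z \<bullet> x" by (rule riesz_repr)
  qed
  then obtain G where "\<And>x y. F x \<bullet> y = G y \<bullet> x" by metis
  then have ex: "\<exists>F'. \<forall>x y. F x \<bullet> y = x \<bullet> F' y" by (metis inner_commute)
  show ?thesis unfolding adjoint_def using someI_ex[OF ex] by blast
qed

lemma ac_ftc: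
  fixes g h :: "real \<Rightarrow> real"
  assumes T: "0 < T" and ac: "abs_cont_on 0 T g" and N: "negligible N"
    and der: "\<And>t. t \<in> {0..T} - N \<Longrightarrow> (g has_real_derivative h t) (at t)"
  shows "(h has_integral (g T - g 0)) {0..T}"
proof -
  define h0 where "h0 = (\<lambda>t. if t \<in> N then 0 else h t)"
  have "(h0 has_integral (g T - g 0)) {0..T}"
    unfolding has_integral_factor_content_real
  proof (intro allI impI)
    fix e :: real assume e: "e > 0"
    have eT: "e * T / 2 > 0" using e T by simp
    obtain \<delta> where \<delta>: "\<delta> > 0" and acd: "\<And>S. finite S \<Longrightarrow> (\<forall>(s,t)\<in>S. 0 \<le> s \<and> s \<le> t \<and> t \<le> T) \<Longrightarrow>
        pairwise (\<lambda>(s,t) (s',t'). {s<..<t} \<inter> {s'<..<t'} = {}) S \<Longrightarrow>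
        (\<Sum>(s,t)\<in>S. t - s) < \<delta> \<Longrightarrow> (\<Sum>(s,t)\<in>S. \<bar>g t - g s\<bar>) < e * T / 2"
      using ac eT unfolding abs_cont_on_def by meson
    have Nl: "N \<in> sets lebesgue" using N negligible_iff_null_sets null_setsD2 by blast
    obtain U where U: "open U" "N \<subseteq> U" "U - N \<in> lmeasurable" "emeasure lebesgue (U - N) < ennreal \<delta>"
      using sets_lebesgue_outer_open[OF Nl \<delta>] by blast
    have Nn: "N \<in> null_sets lebesgue" using N negligible_iff_null_sets by blast
    have UeqN: "U = (U - N) \<union> N" using U(2) by blast
    have Ul0: "(U - N) \<union> N \<in> lmeasurable"
      by (rule fmeasurable.Un[OF U(3) negligible_imp_measurable[OF N]])
    have Ul: "U \<in> lmeasurable" using Ul0 unfolding UeqN[symmetric] .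
    have m1: "measure lebesgue ((U - N) \<union> N) = measure lebesgue (U - N)"
      by (rule measure_Un_null_set[OF fmeasurableD[OF U(3)] Nn])
    have "measure lebesgue U = measure lebesgue (U - N)" using m1 unfolding UeqN[symmetric] .
    also have "\<dots> < \<delta>"
    proof -
      have "ennreal (measure lebesgue (U - N)) < ennreal \<delta>"
        using U(4) emeasure_eq_measure2[OF U(3)] by simp
      then show ?thesis using \<delta> by (simp add: ennreal_less_iff)
    qed
    finally have mU: "measure lebesgue U < \<delta>" .
    have "\<forall>x. \<exists>d>0. x \<in> {0..T} - N \<longrightarrow>
         (\<forall>y. \<bar>y - x\<bar> < d \<longrightarrow> \<bar>g y - g x - (y - x) * h x\<bar> \<le> e/2 * \<bar>y - x\<bar>)"
    proof
      fix x show "\<exists>d>0. x \<in> {0..T} - N \<longrightarrow>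
         (\<forall>y. \<bar>y - x\<bar> < d \<longrightarrow> \<bar>g y - g x - (y - x) * h x\<bar> \<le> e/2 * \<bar>y - x\<bar>)"
      proof (cases "x \<in> {0..T} - N")
        case True
        have "(g has_derivative (\<lambda>z. h x * z)) (at x)"
          using der[OF True] by (simp add: has_field_derivative_def)
        then have "\<forall>e>0. \<exists>d>0. \<forall>y. norm (y - x) < d \<longrightarrow> norm (g y - g x - h x * (y - x)) \<le> e * norm (y - x)"
          unfolding has_derivative_at_alt by blast
        then obtain d where "d > 0" "\<forall>y. norm (y - x) < d \<longrightarrow> norm (g y - g x - h x * (y - x)) \<le> e/2 * norm (y - x)"
          using e half_gt_zero by blast
        then show ?thesis by (intro exI[of _ d]) (auto simp: real_norm_def mult.commute)
      qed (auto intro: exI[of _ 1])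
    qed
    then obtain dd where dd: "\<And>x. dd x > 0"
      "\<And>x y. x \<in> {0..T} - N \<Longrightarrow> \<bar>y - x\<bar> < dd x \<Longrightarrow> \<bar>g y - g x - (y - x) * h x\<bar> \<le> e/2 * \<bar>y - x\<bar>"
      by metis
    have "\<forall>x. \<exists>r>0. x \<in> N \<longrightarrow> ball x r \<subseteq> U"
      using U(1,2) open_contains_ball by blast
    then obtain rr where rr: "\<And>x. rr x > 0" "\<And>x. x \<in> N \<Longrightarrow> ball x (rr x) \<subseteq> U"
      by metis
    define d where "d = (\<lambda>x. if x \<in> N then ball x (rr x) else ball x (dd x))"
    show "\<exists>d. gauge d \<and> (\<forall>p. p tagged_division_of {0..T} \<and> d fine p \<longrightarrow>
      norm (sum (\<lambda>(x,k). Henstock_Kurzweil_Integration.content k *\<^sub>R h0 x) p - (g T - g 0)) \<le> e * Henstock_Kurzweil_Integration.content {0..T})"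
    proof (intro exI conjI allI impI)
      show "gauge d" unfolding d_def gauge_def using dd rr by auto
      fix p assume "p tagged_division_of {0..T} \<and> d fine p"
      then have ptag: "p tagged_division_of {0..T}" and fine: "d fine p" by auto
      define q where "q = {(x,K). (x,K) \<in> p \<and> x \<in> N \<and> Inf K < Sup K}"
      have fp: "finite p" using ptag by blast
      have fq: "finite q" unfolding q_def by (rule finite_subset[OF _ fp]) auto
      have Kform: "\<And>x K. (x,K) \<in> p \<Longrightarrow> \<exists>u v. K = {u..v} \<and> u \<le> v \<and> x \<in> K \<and> K \<subseteq> {0..T}"
      proof -
        fix x K assume xK: "(x,K) \<in> p"
        then obtain u v where "K = cbox u v" using ptag by blast
        moreover have "x \<in> K" "K \<subseteq> {0..T}" using ptag xK by blast+
        ultimately show "\<exists>u v. K = {u..v} \<and> u \<le> v \<and> x \<in> K \<and> K \<subseteq> {0..T}"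
          by (intro exI[of _ u] exI[of _ v]) auto
      qed
      have ba1: "(\<Sum>(x,K)\<in>p. Sup K - Inf K) = T - 0"
        using additive_tagged_division_1[where a=0 and b=T and p=p and f="\<lambda>x. x"] T ptag by simp
      have ba2: "(\<Sum>(x,K)\<in>p. g (Sup K) - g (Inf K)) = g T - g 0"
        using additive_tagged_division_1[where a=0 and b=T and p=p and f=g] T ptag by simp
      have ba: "T - 0 = (\<Sum>(x,K)\<in>p. Sup K - Inf K)" "g T - g 0 = (\<Sum>(x,K)\<in>p. g (Sup K) - g (Inf K))"
        using ba1 ba2 by simp_all
      have tm: "\<bar>Henstock_Kurzweil_Integration.content K * h0 x - (g (Sup K) - g (Inf K))\<bar>
          \<le> e/2 * (Sup K - Inf K) + (if (x,K) \<in> q then \<bar>g (Sup K) - g (Inf K)\<bar> else 0)"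
        if xK: "(x,K) \<in> p" for x K
      proof -
        obtain u v where K: "K = {u..v}" "u \<le> v" "x \<in> K" "K \<subseteq> {0..T}" using Kform[OF xK] by blast
        have SI: "Sup K = v" "Inf K = u" using K by auto
        have cK: "Henstock_Kurzweil_Integration.content K = v - u" using K by simp
        show ?thesis
        proof (cases "x \<in> N")
          case True
          show ?thesis
          proof (cases "u < v")
            case True
            then show ?thesis using \<open>x \<in> N\<close> K SI cK e xK unfolding q_def h0_def by (auto simp: abs_minus_commute)
          next
            case False
            then have "u = v" using K by linarith
            then show ?thesis using \<open>x \<in> N\<close> K SI cK e xK unfolding q_def h0_def by auto
          qed
        next
          case False
          have xin: "x \<in> {0..T} - N" using False K by auto
          have ball: "K \<subseteq> ball x (dd x)" using fine xK False unfolding d_def fine_def by force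
          have uv: "u \<in> K" "v \<in> K" using K by auto
          have bu: "\<bar>g u - g x - (u - x) * h x\<bar> \<le> e/2 * \<bar>u - x\<bar>"
            using dd(2)[OF xin] ball uv by (auto simp: dist_real_def abs_minus_commute subset_iff)
          have bv: "\<bar>g v - g x - (v - x) * h x\<bar> \<le> e/2 * \<bar>v - x\<bar>"
            using dd(2)[OF xin] ball uv by (auto simp: dist_real_def abs_minus_commute subset_iff)
          have eq: "(v - u) * h x - (g v - g u) = (g u - g x - (u - x) * h x) - (g v - g x - (v - x) * h x)"
            by (simp add: algebra_simps)
          have "\<bar>(v - u) * h x - (g v - g u)\<bar> \<le> \<bar>g u - g x - (u - x) * h x\<bar> + \<bar>g v - g x - (v - x) * h x\<bar>"
            unfolding eq by (rule abs_triangle_ineq4)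
          also have "\<dots> \<le> e/2 * \<bar>u - x\<bar> + e/2 * \<bar>v - x\<bar>" using bu bv by (rule add_mono)
          also have "\<dots> = e/2 * (v - u)" using K by (auto simp: field_simps)
          finally have fin: "\<bar>(v - u) * h x - (g v - g u)\<bar> \<le> e/2 * (v - u)" .
          have nq: "(x,K) \<notin> q" using False unfolding q_def by auto
          show ?thesis using fin SI cK False nq unfolding h0_def by simp
        qed
      qed
      have inj: "inj_on (\<lambda>(x,K). (Inf K, Sup K)) q"
      proof (rule inj_onI, clarsimp)
        fix x K x' K' assume a: "(x,K) \<in> q" "(x',K') \<in> q" "Inf K = Inf K'" "Sup K = Sup K'"
        obtain u v where K: "K = {u..v}" "u \<le> v" using Kform a(1) unfolding q_def by blast
        obtain u' v' where K': "K' = {u'..v'}" "u' \<le> v'" using Kform a(2) unfolding q_def by blast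
        have KK: "K = K'" using a K K' by auto
        have "u < v" using a(1) K unfolding q_def by auto
        then have ine: "interior K \<noteq> {}" using K by auto
        have "(x,K) = (x',K')"
        proof (rule ccontr)
          assume ne: "(x,K) \<noteq> (x',K')"
          have "(x,K) \<in> p" "(x',K') \<in> p" using a(1,2) unfolding q_def by auto
          then have "interior K \<inter> interior K' = {}" using tagged_division_ofD(5)[OF ptag] ne by blast
          then show False using KK ine by simp
        qed
        then show "x = x' \<and> K = K'" by simp
      qed
      define S where "S = (\<lambda>(x,K). (Inf K, Sup K)) ` q"
      have sumS1: "(\<Sum>(s,t)\<in>S. t - s) = (\<Sum>(x,K)\<in>q. Sup K - Inf K)"
        unfolding S_def by (subst sum.reindex[OF inj]) (auto simp: case_prod_unfold)
      have sumS2: "(\<Sum>(s,t)\<in>S. \<bar>g t - g s\<bar>) = (\<Sum>(x,K)\<in>q. \<bar>g (Sup K) - g (Inf K)\<bar>)"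
        unfolding S_def by (subst sum.reindex[OF inj]) (auto simp: case_prod_unfold)
      have meas_eq: "(\<Sum>(x,K)\<in>q. Sup K - Inf K) = measure lebesgue (\<Union>(snd ` q))"
      proof -
        have "measure lebesgue (\<Union>(snd ` q)) = (\<Sum>xK\<in>q. measure lebesgue (snd xK))"
        proof (rule measure_negligible_finite_Union_image[OF fq])
          fix xK assume "xK \<in> q"
          then show "snd xK \<in> lmeasurable" using Kform unfolding q_def by force
        next
          show "pairwise (\<lambda>xK yK. negligible (snd xK \<inter> snd yK)) q"
          unfolding pairwise_def
          proof (intro ballI impI)
            fix xK yK assume a0: "xK \<in> q" "yK \<in> q" "xK \<noteq> yK"
            obtain x K x' K' where xy: "xK = (x,K)" "yK = (x',K')" by (cases xK, cases yK) auto
            have a: "(x,K) \<in> q" "(x',K') \<in> q" "(x,K) \<noteq> (x',K')" using a0 xy by auto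
            obtain u v where K: "K = {u..v}" "u \<le> v" using Kform a(1) unfolding q_def by blast
            obtain u' v' where K': "K' = {u'..v'}" "u' \<le> v'" using Kform a(2) unfolding q_def by blast
            have "interior K \<inter> interior K' = {}"
              using ptag a unfolding q_def by (auto dest: tagged_division_ofD(5))
            then have "{u<..<v} \<inter> {u'<..<v'} = {}" using K K' by simp
            then have "K \<inter> K' \<subseteq> {u,v,u',v'}" using K K' by auto
            then have "negligible (K \<inter> K')"
              by (rule negligible_subset[OF negligible_finite[of "{u,v,u',v'}"], rotated]) auto
            then show "negligible (snd xK \<inter> snd yK)" using xy by simp
          qed
        qed
        also have "\<dots> = (\<Sum>(x,K)\<in>q. Sup K - Inf K)"
        proof (rule sum.cong[OF refl], clarsimp)
          fix x K assume "(x,K) \<in> q"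
          then obtain u v where K: "K = {u..v}" "u \<le> v" using Kform unfolding q_def by blast
          then show "measure lebesgue K = Sup K - Inf K" by simp
        qed
        finally show ?thesis by simp
      qed
      have "\<Union>(snd ` q) \<subseteq> U"
      proof clarsimp
        fix x K z assume "(x,K) \<in> q" "z \<in> K"
        then have "K \<subseteq> ball x (rr x)" "x \<in> N" using fine unfolding q_def d_def fine_def by force+
        then show "z \<in> U" using rr(2) \<open>z \<in> K\<close> by blast
      qed
      moreover have "\<Union>(snd ` q) \<in> lmeasurable"
      proof (rule fmeasurable.finite_Union)
        show "finite (snd ` q)" using fq by simp
        show "snd ` q \<subseteq> lmeasurable" using Kform unfolding q_def by force
      qed
      ultimately have "measure lebesgue (\<Union>(snd ` q)) \<le> measure lebesgue U"
        using measure_mono_fmeasurable fmeasurableD Ul by blast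
      then have sumlen: "(\<Sum>(s,t)\<in>S. t - s) < \<delta>" using sumS1 meas_eq mU by linarith
      have Sprops: "\<forall>(s,t)\<in>S. 0 \<le> s \<and> s \<le> t \<and> t \<le> T"
      proof (clarsimp simp: S_def)
        fix x K assume "(x,K) \<in> q"
        then obtain u v where K: "K = {u..v}" "u \<le> v" "K \<subseteq> {0..T}" using Kform unfolding q_def by blast
        then show "0 \<le> Inf K \<and> Inf K \<le> Sup K \<and> Sup K \<le> T" by auto
      qed
      have Spw: "pairwise (\<lambda>(s,t) (s',t'). {s<..<t} \<inter> {s'<..<t'} = {}) S"
        unfolding pairwise_def
      proof (intro ballI impI)
        fix st st' assume st: "st \<in> S" "st' \<in> S" "st \<noteq> st'"
        obtain x K where xK: "(x,K) \<in> q" "st = (Inf K, Sup K)" using st(1) unfolding S_def by auto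
        obtain x' K' where xK': "(x',K') \<in> q" "st' = (Inf K', Sup K')" using st(2) unfolding S_def by auto
        obtain u v where K: "K = {u..v}" "u \<le> v" using Kform xK(1) unfolding q_def by blast
        obtain u' v' where K': "K' = {u'..v'}" "u' \<le> v'" using Kform xK'(1) unfolding q_def by blast
        have ne: "(x,K) \<noteq> (x',K')" using st(3) xK xK' by auto
        have "(x,K) \<in> p" "(x',K') \<in> p" using xK(1) xK'(1) unfolding q_def by auto
        then have "interior K \<inter> interior K' = {}"
          using tagged_division_ofD(5)[OF ptag] ne by blast
        then have "{Inf K<..<Sup K} \<inter> {Inf K'<..<Sup K'} = {}" using K K' by simp
        then show "(\<lambda>(s,t) (s',t'). {s<..<t} \<inter> {s'<..<t'} = {}) st st'" using xK xK' by simp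
      qed
      have finS: "finite S" unfolding S_def using fq by simp
      have acq: "(\<Sum>(x,K)\<in>q. \<bar>g (Sup K) - g (Inf K)\<bar>) < e * T / 2"
        using acd[OF finS Sprops Spw sumlen] sumS2 by simp
      have qp: "q \<subseteq> p" unfolding q_def by auto
      have "\<bar>(\<Sum>(x,K)\<in>p. Henstock_Kurzweil_Integration.content K * h0 x) - (g T - g 0)\<bar>
          = \<bar>\<Sum>(x,K)\<in>p. Henstock_Kurzweil_Integration.content K * h0 x - (g (Sup K) - g (Inf K))\<bar>"
        by (simp add: ba(2) sum_subtractf case_prod_unfold)
      also have "\<dots> \<le> (\<Sum>(x,K)\<in>p. \<bar>Henstock_Kurzweil_Integration.content K * h0 x - (g (Sup K) - g (Inf K))\<bar>)"
        by (rule order_trans[OF sum_abs]) (simp add: case_prod_unfold)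
      also have "\<dots> \<le> (\<Sum>(x,K)\<in>p. e/2 * (Sup K - Inf K) + (if (x,K) \<in> q then \<bar>g (Sup K) - g (Inf K)\<bar> else 0))"
        by (rule sum_mono) (use tm in auto)
      also have "\<dots> = e/2 * T + (\<Sum>(x,K)\<in>q. \<bar>g (Sup K) - g (Inf K)\<bar>)"
      proof -
        have "(\<Sum>(x,K)\<in>p. (if (x,K) \<in> q then \<bar>g (Sup K) - g (Inf K)\<bar> else 0))
             = (\<Sum>(x,K)\<in>q. \<bar>g (Sup K) - g (Inf K)\<bar>)"
          using sum.inter_restrict[OF fp, of "\<lambda>(x,K). \<bar>g (Sup K) - g (Inf K)\<bar>" q] qp
          by (simp add: case_prod_unfold indicator_def if_distrib Int_absorb1 cong: if_cong)
        moreover have "(\<Sum>(x,K)\<in>p. e/2 * (Sup K - Inf K)) = e/2 * T"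
          using ba(1) by (simp add: sum_distrib_left case_prod_unfold)
        ultimately show ?thesis by (simp add: sum.distrib case_prod_unfold)
      qed
      also have "\<dots> \<le> e * Henstock_Kurzweil_Integration.content {0..T}" using acq T by simp
      finally show "norm (sum (\<lambda>(x,k). Henstock_Kurzweil_Integration.content k *\<^sub>R h0 x) p - (g T - g 0)) \<le> e * Henstock_Kurzweil_Integration.content {0..T}"
        by (simp add: case_prod_unfold)
    qed
  qed
  then show ?thesis
    by (rule has_integral_spike[OF N, rotated]) (auto simp: h0_def)
qed

lemma fy_ge:
  fixes K :: "'a::real_inner \<Rightarrow> 'a \<Rightarrow> 'a"
  assumes bl: "bounded_linear (K y)" and psd: "\<And>v. 0 \<le> K y v \<bullet> v"
  shows "ereal (w \<bullet> v) \<le> psi K y v + psi_star K y w"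
    and "0 \<le> psi K y v + psi_star K y w"
proof -
  interpret k: bounded_linear "K y" by fact
  have s1: "ereal (v \<bullet> w) - ereal ((1/2) * (K y w \<bullet> w)) \<le> psi K y v"
    unfolding psi_def psi_star_def by (rule SUP_upper) simp
  then have "ereal (v \<bullet> w - (1/2) * (K y w \<bullet> w)) \<le> psi K y v" by simp
  then have "ereal (v \<bullet> w - (1/2) * (K y w \<bullet> w)) + ereal ((1/2) * (K y w \<bullet> w))
        \<le> psi K y v + ereal ((1/2) * (K y w \<bullet> w))" by (rule add_right_mono)
  then show "ereal (w \<bullet> v) \<le> psi K y v + psi_star K y w"
    by (simp add: psi_star_def inner_commute)
  have "ereal (v \<bullet> 0) - ereal ((1/2) * (K y 0 \<bullet> 0)) \<le> psi K y v"
    unfolding psi_def psi_star_def by (rule SUP_upper) simp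
  then have p0: "0 \<le> psi K y v" by simp
  have p1: "0 \<le> psi_star K y w" unfolding psi_star_def using psd[of w] by simp
  show "0 \<le> psi K y v + psi_star K y w" using p0 p1 by simp
qed

lemma fy_eq:
  fixes K :: "'a::real_inner \<Rightarrow> 'a \<Rightarrow> 'a"
  assumes bl: "bounded_linear (K y)" and sym: "\<And>a b. K y a \<bullet> b = a \<bullet> K y b"
    and psd: "\<And>v. 0 \<le> K y v \<bullet> v"
  shows "psi K y v + psi_star K y w = ereal (w \<bullet> v) \<longleftrightarrow> v = K y w"
proof
  interpret k: bounded_linear "K y" by fact
  assume eq: "psi K y v + psi_star K y w = ereal (w \<bullet> v)"
  define a where "a = (1/2) * (K y w \<bullet> w)"
  have "psi K y v + ereal a = ereal (w \<bullet> v)" using eq unfolding psi_star_def a_def .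
  then have S: "psi K y v = ereal (w \<bullet> v - a)"
    by (cases "psi K y v") auto
  define z where "z = v - K y w"
  define n where "n = z \<bullet> z"
  define c where "c = K y z \<bullet> z"
  have c0: "0 \<le> c" unfolding c_def by (rule psd)
  have n0: "0 \<le> n" unfolding n_def by simp
  have key: "s * n \<le> s^2 * c / 2" for s
  proof -
    have "ereal (v \<bullet> (w + s *\<^sub>R z)) - ereal ((1/2) * (K y (w + s *\<^sub>R z) \<bullet> (w + s *\<^sub>R z))) \<le> psi K y v"
      unfolding psi_def psi_star_def by (rule SUP_upper) simp
    then have ineq: "v \<bullet> (w + s *\<^sub>R z) - (1/2) * (K y (w + s *\<^sub>R z) \<bullet> (w + s *\<^sub>R z)) \<le> w \<bullet> v - a"
      unfolding S by simp
    have hs: "K y z \<bullet> w = K y w \<bullet> z" using sym[of z w] by (simp add: inner_commute)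
    have "K y (w + s *\<^sub>R z) \<bullet> (w + s *\<^sub>R z) = K y w \<bullet> w + 2 * s * (K y w \<bullet> z) + s^2 * c"
      unfolding c_def by (simp add: k.add k.scale inner_add_left inner_add_right hs power2_eq_square algebra_simps)
    moreover have "v \<bullet> (w + s *\<^sub>R z) = v \<bullet> w + s * (v \<bullet> z)" by (simp add: inner_add_right)
    moreover have "v \<bullet> z - K y w \<bullet> z = n" unfolding n_def z_def by (simp add: inner_diff_left)
    ultimately show ?thesis using ineq unfolding a_def by (simp add: inner_commute algebra_simps)
  qed
  define s where "s = n / (c + 1)"
  have s0: "0 \<le> s" unfolding s_def using n0 c0 by simp
  have sc: "s * (c + 1) = n" unfolding s_def using c0 by simp
  have "2 * (n * n) = 2 * ((s * (c + 1)) * n)" by (simp add: sc)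
  also have "\<dots> = 2 * (c + 1) * (s * n)" by (simp add: algebra_simps)
  also have "\<dots> \<le> 2 * (c + 1) * (s^2 * c / 2)"
    by (rule mult_left_mono[OF key]) (use c0 in simp)
  also have "\<dots> = (s * c) * (s * (c + 1))" by (simp add: power2_eq_square algebra_simps)
  also have "\<dots> = (s * c) * n" by (simp add: sc)
  also have "\<dots> \<le> n * n"
  proof (rule mult_right_mono[OF _ n0])
    show "s * c \<le> n" using sc s0 by (simp add: algebra_simps)
  qed
  finally have "n * n \<le> 0" by simp
  then have "n = 0" using n0 by (simp add: mult_le_0_iff)
  then show "v = K y w" unfolding n_def z_def by simp
next
  interpret k: bounded_linear "K y" by fact
  assume v: "v = K y w"
  have le: "psi K y v \<le> ereal ((1/2) * (K y w \<bullet> w))"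
    unfolding psi_def psi_star_def
  proof (rule SUP_least)
    fix \<xi>
    have "0 \<le> K y (\<xi> - w) \<bullet> (\<xi> - w)" by (rule psd)
    also have "\<dots> = K y \<xi> \<bullet> \<xi> - 2 * (K y w \<bullet> \<xi>) + K y w \<bullet> w"
      using sym[of \<xi> w] by (simp add: k.diff inner_diff_left inner_diff_right inner_commute)
    finally have "K y w \<bullet> \<xi> - (1/2) * (K y \<xi> \<bullet> \<xi>) \<le> (1/2) * (K y w \<bullet> w)" by simp
    then show "ereal (v \<bullet> \<xi>) - ereal ((1/2) * (K y \<xi> \<bullet> \<xi>)) \<le> ereal ((1/2) * (K y w \<bullet> w))"
      using v by simp
  qed
  have "psi K y v + psi_star K y w \<le> ereal ((1/2) * (K y w \<bullet> w)) + ereal ((1/2) * (K y w \<bullet> w))"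
    unfolding psi_star_def by (rule add_right_mono[OF le])
  also have "\<dots> = ereal (w \<bullet> v)" using v by (simp add: inner_commute)
  finally show "psi K y v + psi_star K y w = ereal (w \<bullet> v)"
    using fy_ge(1)[where K=K and y=y, OF bl psd, of w v] by (rule antisym)
qed

lemma sq_sum_le: "((a::real) + b)^2 \<le> 2 * a^2 + 2 * b^2"
proof -
  have "0 \<le> (a - b)^2" by simp
  moreover have "(a+b)^2 = a^2 + 2*a*b + b^2" "(a-b)^2 = a^2 - 2*a*b + b^2"
    by (simp_all add: power2_eq_square algebra_simps)
  ultimately show ?thesis by linarith
qed

lemma prod_le_sq: "(a::real) * b \<le> a^2 + b^2"
proof -
  have "0 \<le> (a - b)^2" by simp
  moreover have "(a-b)^2 = a^2 - 2*a*b + b^2" by (simp add: power2_eq_square algebra_simps)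
  moreover have "0 \<le> a^2" "0 \<le> b^2" by simp_all
  ultimately show ?thesis by linarith
qed

lemma L2_diff:
  fixes f g :: "real \<Rightarrow> 'a::{real_normed_vector, second_countable_topology}"
  assumes f: "L2 T f" and g: "L2 T g"
  shows "L2 T (\<lambda>t. f t - g t)"
proof -
  have mf: "f \<in> borel_measurable (lebesgue_on {0..T})" and mg: "g \<in> borel_measurable (lebesgue_on {0..T})"
    and if': "integrable (lebesgue_on {0..T}) (\<lambda>t. (norm (f t))^2)"
    and ig: "integrable (lebesgue_on {0..T}) (\<lambda>t. (norm (g t))^2)"
    using f g unfolding L2_def by auto
  have m: "(\<lambda>t. f t - g t) \<in> borel_measurable (lebesgue_on {0..T})" using mf mg by measurable
  have "integrable (lebesgue_on {0..T}) (\<lambda>t. 2 * (norm (f t))^2 + 2 * (norm (g t))^2)"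
    using if' ig by (intro Bochner_Integration.integrable_add Bochner_Integration.integrable_mult_right)
  moreover have "(\<lambda>t. (norm (f t - g t))^2) \<in> borel_measurable (lebesgue_on {0..T})" using m by measurable
  moreover have "AE t in lebesgue_on {0..T}. norm ((norm (f t - g t))^2) \<le> norm (2 * (norm (f t))^2 + 2 * (norm (g t))^2)"
  proof (rule AE_I2)
    fix t
    have "norm (f t - g t) \<le> norm (f t) + norm (g t)" by (rule norm_triangle_ineq4)
    then have "(norm (f t - g t))^2 \<le> (norm (f t) + norm (g t))^2" by (rule power_mono) simp
    also have "\<dots> \<le> 2 * (norm (f t))^2 + 2 * (norm (g t))^2" by (rule sq_sum_le)
    finally show "norm ((norm (f t - g t))^2) \<le> norm (2 * (norm (f t))^2 + 2 * (norm (g t))^2)" by simp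
  qed
  ultimately have "integrable (lebesgue_on {0..T}) (\<lambda>t. (norm (f t - g t))^2)"
    by (rule Bochner_Integration.integrable_bound)
  then show ?thesis unfolding L2_def using m by simp
qed

lemma L2_inner:
  fixes f g :: "real \<Rightarrow> 'a::{real_inner, second_countable_topology}"
  assumes f: "L2 T f" and g: "L2 T g"
  shows "integrable (lebesgue_on {0..T}) (\<lambda>t. f t \<bullet> g t)"
proof -
  have mf: "f \<in> borel_measurable (lebesgue_on {0..T})" and mg: "g \<in> borel_measurable (lebesgue_on {0..T})"
    and if': "integrable (lebesgue_on {0..T}) (\<lambda>t. (norm (f t))^2)"
    and ig: "integrable (lebesgue_on {0..T}) (\<lambda>t. (norm (g t))^2)"
    using f g unfolding L2_def by auto
  have "integrable (lebesgue_on {0..T}) (\<lambda>t. (norm (f t))^2 + (norm (g t))^2)"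
    using if' ig by (intro Bochner_Integration.integrable_add)
  moreover have "(\<lambda>t. f t \<bullet> g t) \<in> borel_measurable (lebesgue_on {0..T})" using mf mg by measurable
  moreover have "AE t in lebesgue_on {0..T}. norm (f t \<bullet> g t) \<le> norm ((norm (f t))^2 + (norm (g t))^2)"
  proof (rule AE_I2)
    fix t
    have "\<bar>f t \<bullet> g t\<bar> \<le> norm (f t) * norm (g t)" by (rule Cauchy_Schwarz_ineq2)
    also have "\<dots> \<le> (norm (f t))^2 + (norm (g t))^2" by (rule prod_le_sq)
    finally show "norm (f t \<bullet> g t) \<le> norm ((norm (f t))^2 + (norm (g t))^2)" by simp
  qed
  ultimately show ?thesis by (rule Bochner_Integration.integrable_bound)
qed

lemma AE_lebesgue_on_negl:
  assumes "AE t in lebesgue_on S. P t" "S \<in> sets lebesgue"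
  obtains N where "negligible N" "\<forall>t\<in>S - N. P t"
proof -
  have "AE t in lebesgue. t \<in> S \<longrightarrow> P t"
    using assms AE_restrict_space_iff[of S lebesgue P] by simp
  then obtain N where N: "{t \<in> space lebesgue. \<not> (t \<in> S \<longrightarrow> P t)} \<subseteq> N" "emeasure lebesgue N = 0" "N \<in> sets lebesgue"
    by (rule AE_E)
  have "negligible N" using N(2,3) negligible_iff_null_sets null_setsI by blast
  moreover have "\<forall>t\<in>S - N. P t" using N(1) by auto
  ultimately show ?thesis by (rule that)
qed

theorem mainTheorem9:
  fixes T :: real
    and E :: "'a::{real_inner, banach, second_countable_topology} \<Rightarrow> real"
    and DE :: "'a \<Rightarrow> 'a"
    and \<phi>1 :: "'a \<Rightarrow> ereal" and \<phi>2 :: "'a \<Rightarrow> real" and D\<phi>2 :: "'a \<Rightarrow> 'a"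
    and K L :: "'a \<Rightarrow> 'a \<Rightarrow> 'a"
    and y0 :: 'a and u y y' :: "real \<Rightarrow> 'a"
  assumes T: "T > 0"
    and E_diff: "\<And>x. (E has_derivative (\<lambda>h. DE x \<bullet> h)) (at x)"
    and phi1: "proper_fun \<phi>1" "convex_ereal_fun \<phi>1" "lsc_fun \<phi>1"
    and phi2: "\<And>x. (\<phi>2 has_derivative (\<lambda>h. D\<phi>2 x \<bullet> h)) (at x)"
    and phi2_lip: "\<exists>C. C-lipschitz_on UNIV D\<phi>2"
    and single_valued: "\<And>x. x \<in> dom_subdiff_phi \<phi>1 D\<phi>2 \<Longrightarrow>
                              \<exists>\<xi>. subdiff_phi \<phi>1 D\<phi>2 x = {\<xi>}"
    and chain: "chain_rule T \<phi>1 \<phi>2 D\<phi>2"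
    and K: "\<And>x. bounded_linear (K x)" "\<And>x. adjoint (K x) = K x"
           "\<And>x v. 0 \<le> K x v \<bullet> v"
    and L: "\<And>x. bounded_linear (L x)" "\<And>x. adjoint (L x) = (\<lambda>v. - L x v)"
    and orth: "\<And>x. x \<in> dom_subdiff_phi \<phi>1 D\<phi>2 \<Longrightarrow>
                 adjoint (L x) (dphi \<phi>1 D\<phi>2 x) = 0 \<and> adjoint (K x) (DE x) = 0"
    and u: "L2 T u"
    and y: "H1 T y y'" "y 0 = y0"
    and y_dom: "AE t in lebesgue_on {0..T}. y t \<in> dom_subdiff_phi \<phi>1 D\<phi>2"
    and dphi_y: "L2 T (\<lambda>t. dphi \<phi>1 D\<phi>2 (y t))"
    and LDE_y: "L2 T (\<lambda>t. L (y t) (DE (y t)))"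
    and meas: "(\<lambda>t. psi K (y t) (y' t - L (y t) (DE (y t)))
                 + psi_star K (y t) (u t - dphi \<phi>1 D\<phi>2 (y t)))
               \<in> borel_measurable (lebesgue_on {0..T})"
  shows "G_DG T K L DE \<phi>1 \<phi>2 D\<phi>2 y0 u y y' = 0 \<longleftrightarrow>
         (AE t in lebesgue_on {0..T}.
            y' t = L (y t) (DE (y t)) - K (y t) (dphi \<phi>1 D\<phi>2 (y t) - u t))"
proof -
  let ?M = "lebesgue_on {0..T::real}"
  define \<xi> where "\<xi> = (\<lambda>t. dphi \<phi>1 D\<phi>2 (y t))"
  define V where "V = (\<lambda>t. y' t - L (y t) (DE (y t)))"
  define W where "W = (\<lambda>t. u t - \<xi> t)"
  define F where "F = (\<lambda>t. psi K (y t) (V t) + psi_star K (y t) (W t))"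
  have Ksym: "K x a \<bullet> b = a \<bullet> K x b" for x a b
    using adjoint_prop[OF K(1)[of x], of a b] K(2)[of x] by simp
  have Lskew: "L x a \<bullet> b = - (a \<bullet> L x b)" for x a b
    using adjoint_prop[OF L(1)[of x], of a b] L(2)[of x] by simp
  have H1y: "L2 T y'" using y(1) unfolding H1_def by auto
  have xiL2: "L2 T \<xi>" unfolding \<xi>_def by (rule dphi_y)
  have VL2: "L2 T V" unfolding V_def by (rule L2_diff[OF H1y LDE_y])
  have WL2: "L2 T W" unfolding W_def by (rule L2_diff[OF u xiL2])
  have xi_sub: "\<xi> t \<in> subdiff_phi \<phi>1 D\<phi>2 (y t)" if ydom: "y t \<in> dom_subdiff_phi \<phi>1 D\<phi>2" for t
  proof -
    obtain z where z: "subdiff_phi \<phi>1 D\<phi>2 (y t) = {z}" using single_valued[OF ydom] by blast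
    have "dphi \<phi>1 D\<phi>2 (y t) = z" unfolding dphi_def z by simp
    then show ?thesis unfolding \<xi>_def z by simp
  qed
  have xiLDE: "\<xi> t \<bullet> L (y t) (DE (y t)) = 0" if "y t \<in> dom_subdiff_phi \<phi>1 D\<phi>2" for t
  proof -
    have "adjoint (L (y t)) (\<xi> t) = 0" using orth[OF that] unfolding \<xi>_def by simp
    then have "L (y t) (\<xi> t) = 0" using L(2)[of "y t"] by simp
    then show ?thesis using Lskew[of "y t" "\<xi> t" "DE (y t)"] by simp
  qed
  have AE_xiV: "AE t in ?M. \<xi> t \<bullet> y' t = \<xi> t \<bullet> V t"
    using y_dom by (rule eventually_mono) (simp add: V_def inner_diff_right xiLDE)
  have AEsub: "AE t in ?M. \<xi> t \<in> subdiff_phi \<phi>1 D\<phi>2 (y t)"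
    using y_dom by (rule eventually_mono) (rule xi_sub)
  have "\<exists>g. abs_cont_on 0 T g \<and> (\<forall>t\<in>{0..T}. phi_fun \<phi>1 \<phi>2 (y t) = ereal (g t)) \<and>
             (AE t in ?M. (g has_real_derivative (\<xi> t \<bullet> y' t)) (at t))"
    using chain[unfolded chain_rule_def, rule_format, of y y' \<xi>] y(1) xiL2 AEsub by blast
  then obtain g where g: "abs_cont_on 0 T g" "\<forall>t\<in>{0..T}. phi_fun \<phi>1 \<phi>2 (y t) = ereal (g t)"
     "AE t in ?M. (g has_real_derivative (\<xi> t \<bullet> y' t)) (at t)" by blast
  have Tset: "{0..T} \<in> sets lebesgue" by simp
  obtain N where N: "negligible N" "\<forall>t\<in>{0..T}-N. (g has_real_derivative (\<xi> t \<bullet> y' t)) (at t)"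
    using AE_lebesgue_on_negl[OF g(3) Tset] by blast
  have hi: "((\<lambda>t. \<xi> t \<bullet> y' t) has_integral (g T - g 0)) {0..T}"
    by (rule ac_ftc[OF T g(1) N(1)]) (use N(2) in auto)
  have int_xiy: "integrable ?M (\<lambda>t. \<xi> t \<bullet> y' t)" by (rule L2_inner[OF xiL2 H1y])
  have I1: "(\<integral>t. \<xi> t \<bullet> y' t \<partial>?M) = g T - g 0"
    using lebesgue_integral_eq_integral[OF int_xiy Tset] hi integral_unique by metis
  have int_uV: "integrable ?M (\<lambda>t. u t \<bullet> V t)" by (rule L2_inner[OF u VL2])
  have int_xiV: "integrable ?M (\<lambda>t. \<xi> t \<bullet> V t)" by (rule L2_inner[OF xiL2 VL2])
  have int_WV: "integrable ?M (\<lambda>t. W t \<bullet> V t)" by (rule L2_inner[OF WL2 VL2])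
  define c where "c = (\<integral>t. W t \<bullet> V t \<partial>?M)"
  have c_eq: "(\<integral>t. u t \<bullet> V t \<partial>?M) - (g T - g 0) = c"
  proof -
    have "(\<integral>t. \<xi> t \<bullet> y' t \<partial>?M) = (\<integral>t. \<xi> t \<bullet> V t \<partial>?M)"
      by (rule integral_cong_AE[OF borel_measurable_integrable[OF int_xiy]
            borel_measurable_integrable[OF int_xiV] AE_xiV])
    moreover have "(\<integral>t. u t \<bullet> V t \<partial>?M) - (\<integral>t. \<xi> t \<bullet> V t \<partial>?M) = (\<integral>t. u t \<bullet> V t - \<xi> t \<bullet> V t \<partial>?M)"
      by (rule Bochner_Integration.integral_diff[symmetric, OF int_uV int_xiV])
    moreover have "(\<lambda>t. u t \<bullet> V t - \<xi> t \<bullet> V t) = (\<lambda>t. W t \<bullet> V t)"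
      by (simp add: W_def inner_diff_left)
    ultimately show ?thesis using I1 unfolding c_def by simp
  qed
  define I where "I = (\<integral>\<^sup>+t. e2ennreal (F t) \<partial>?M)"
  have pT: "phi_fun \<phi>1 \<phi>2 (y T) = ereal (g T)" using g(2) T by simp
  have p0: "phi_fun \<phi>1 \<phi>2 y0 = ereal (g 0)" using g(2) T y(2) by force
  have Gdef: "G_DG T K L DE \<phi>1 \<phi>2 D\<phi>2 y0 u y y' =
      enn2ereal I - ereal (\<integral>t. u t \<bullet> V t \<partial>?M) + ereal (g T) - ereal (g 0)"
    unfolding G_DG_def I_def F_def V_def W_def \<xi>_def using y_dom y(2) pT p0 by simp
  have G_eq: "G_DG T K L DE \<phi>1 \<phi>2 D\<phi>2 y0 u y y' = 0 \<longleftrightarrow> enn2ereal I = ereal c"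
    unfolding Gdef using c_eq by (cases "enn2ereal I") auto
  have Fge: "ereal (W t \<bullet> V t) \<le> F t" for t
    unfolding F_def by (rule fy_ge(1)[where K=K and y="y t", OF K(1) K(3)])
  have F0: "0 \<le> F t" for t
    unfolding F_def by (rule fy_ge(2)[where K=K and y="y t", OF K(1) K(3)])
  have Feq: "F t = ereal (W t \<bullet> V t) \<longleftrightarrow> V t = K (y t) (W t)" for t
    unfolding F_def by (rule fy_eq[where K=K and y="y t", OF K(1) Ksym K(3)])
  have equiv: "(y' t = L (y t) (DE (y t)) - K (y t) (dphi \<phi>1 D\<phi>2 (y t) - u t)) \<longleftrightarrow> V t = K (y t) (W t)" for t
  proof -
    interpret k: bounded_linear "K (y t)" by (rule K(1))
    have "K (y t) (dphi \<phi>1 D\<phi>2 (y t) - u t) = - K (y t) (W t)"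
      unfolding W_def \<xi>_def by (simp add: k.diff)
    then show ?thesis unfolding V_def by (auto simp: algebra_simps)
  qed
  have RHS: "(AE t in ?M. y' t = L (y t) (DE (y t)) - K (y t) (dphi \<phi>1 D\<phi>2 (y t) - u t))
           \<longleftrightarrow> (AE t in ?M. V t = K (y t) (W t))"
    by (simp only: equiv)
  have Fmeas: "F \<in> borel_measurable ?M" using meas unfolding F_def V_def W_def \<xi>_def .
  show ?thesis
    unfolding G_eq RHS
  proof
    assume h: "enn2ereal I = ereal c"
    have c0: "0 \<le> c" using h enn2ereal_nonneg[of I] by simp
    have Iv: "I = ennreal c" using arg_cong[OF h, of e2ennreal] by simp
    have eF_meas: "(\<lambda>t. e2ennreal (F t)) \<in> borel_measurable ?M"
      using measurable_compose[OF Fmeas measurable_e2ennreal] by (simp add: comp_def)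
    have AEfin: "AE t in ?M. e2ennreal (F t) \<noteq> \<infinity>"
      by (rule nn_integral_noteq_infinite[OF eF_meas]) (simp add: I_def[symmetric] Iv)
    define R where "R = (\<lambda>t. real_of_ereal (F t))"
    have AER: "AE t in ?M. F t = ereal (R t)"
      using AEfin
    proof (rule eventually_mono)
      fix t assume "e2ennreal (F t) \<noteq> \<infinity>"
      then show "F t = ereal (R t)" using F0[of t] unfolding R_def by (cases "F t") auto
    qed
    have Rmeas: "R \<in> borel_measurable ?M"
      unfolding R_def using measurable_compose[OF Fmeas borel_measurable_real_of_ereal] by (simp add: comp_def)
    have R0: "0 \<le> R t" for t unfolding R_def using F0[of t] by (simp add: real_of_ereal_pos)
    have IR: "I = (\<integral>\<^sup>+t. ennreal (R t) \<partial>?M)"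
      unfolding I_def by (rule nn_integral_cong_AE) (use AER in \<open>auto elim: eventually_mono\<close>)
    have nnR: "(\<integral>\<^sup>+t. ennreal (R t) \<partial>?M) = ennreal c" using IR Iv by simp
    have intR: "integrable ?M R"
      by (rule integrableI_nonneg[OF Rmeas]) (use R0 nnR in auto)
    have "ennreal (\<integral>t. R t \<partial>?M) = ennreal c"
      using nn_integral_eq_integral[OF intR] R0 IR Iv by simp
    then have intRc: "(\<integral>t. R t \<partial>?M) = c"
      using c0 integral_nonneg_AE[of R ?M] R0 by (simp add: ennreal_inj)
    have AEge: "AE t in ?M. 0 \<le> R t - W t \<bullet> V t"
      using AER
    proof (rule eventually_mono)
      fix t assume "F t = ereal (R t)"
      then show "0 \<le> R t - W t \<bullet> V t" using Fge[of t] by simp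
    qed
    have intD: "integrable ?M (\<lambda>t. R t - W t \<bullet> V t)" by (rule Bochner_Integration.integrable_diff[OF intR int_WV])
    have "(\<integral>t. R t - W t \<bullet> V t \<partial>?M) = 0"
      using Bochner_Integration.integral_diff[OF intR int_WV] intRc unfolding c_def by simp
    then have "AE t in ?M. R t - W t \<bullet> V t = 0"
      using integral_nonneg_eq_0_iff_AE[OF intD AEge] by simp
    then show "AE t in ?M. V t = K (y t) (W t)"
      using AER
    proof (eventually_elim)
      case (elim t)
      then have "F t = ereal (W t \<bullet> V t)" by simp
      then show ?case using Feq by simp
    qed
  next
    assume h: "AE t in ?M. V t = K (y t) (W t)"
    have AEF: "AE t in ?M. F t = ereal (W t \<bullet> V t)"
      using h by (rule eventually_mono) (use Feq in blast)
    have AEnn: "AE t in ?M. 0 \<le> W t \<bullet> V t"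
      using h
    proof (rule eventually_mono)
      fix t assume "V t = K (y t) (W t)"
      then show "0 \<le> W t \<bullet> V t" using K(3)[of "y t" "W t"] by (simp add: inner_commute)
    qed
    have "I = (\<integral>\<^sup>+t. ennreal (W t \<bullet> V t) \<partial>?M)"
      unfolding I_def by (rule nn_integral_cong_AE) (use AEF in \<open>auto elim: eventually_mono\<close>)
    also have "\<dots> = ennreal c"
      unfolding c_def by (rule nn_integral_eq_integral[OF int_WV AEnn])
    finally have "I = ennreal c" .
    moreover have "0 \<le> c" unfolding c_def by (rule integral_nonneg_AE[OF AEnn])
    ultimately show "enn2ereal I = ereal c" by simp
  qed
qed

end
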